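(* Let $\mathcal{T}=[0,T_{max}]$, $\mathcal{T}_d,\mathcal{T}_a\subseteq\mathcal{T}$ compact, $\mathcal{X}=[X_{min},X_{max}]$ with $0\le X_{min}<X_{max}$, $m$ a probability measure on $\mathcal{X}\times\mathcal{T}_a$, $G>0$, and let $V:\mathbb{R}^+\to\mathbb{R}^+$ be a strictly decreasing Lipschitz continuous speed function. For $E\in\mathcal{M}_{m,G}$ let $z_{\mathcal{F}(E)}$ denote the unique $z\in\mathcal{C}(\mathcal{T})$ with $z(t)=\int_0^t V\big(\mathcal{F}(E)(S_s(z))\big)\,ds$ for all $t\in\mathcal{T}$. Then the map $E\mapsto z_{\mathcal{F}(E)}$ is continuous from $\mathcal{M}_{m,G}$ (with the weak convergence topology) to $\mathcal{C}(\mathcal{T})$ (with the uniform norm): if $E_k,E\in\mathcal{M}_{m,G}$ and $E_k\Rightarrow E$ weakly, then $z_{\mathcal{F}(E_k)}\to z_{\mathcal{F}(E)}$ uniformly.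
   Context: $\mathcal{C}(\mathcal{T})$ denotes the space of real-valued continuous functions on $\mathcal{T}$. $\lambda_2$ denotes Lebesgue measure on $\mathbb{R}^2$. $\mathcal{P}_{m,G}$ is the set of all Borel probability measures $F$ on $\mathcal{T}_d\times\mathcal{X}$ such that (i) $F(B)\le G\,\lambda_2(B)$ for every Borel $B\subseteq\mathcal{T}_d\times\mathcal{X}$, and (ii) $F(\mathcal{T}_d\times B)=m(B\times\mathcal{T}_a)$ for every Borel $B\subseteq\mathcal{X}$. For a Borel probability measure $E$ on $\mathcal{T}_d\times\mathcal{X}\times\mathcal{T}_a$ (a "dis-aggregated in-flow measure", i.e. the joint law of departure time, trip length and desired arrival time), $\mathcal{F}(E)$ is its marginal on $\mathcal{T}_d\times\mathcal{X}$: $\mathcal{F}(E)(B)=E(B\times\mathcal{T}_a)$. $\mathcal{M}_{m,G}$ is the set of such $E$ whose marginal on $\mathcal{X}\times\mathcal{T}_a$ equals $m$ and with $\mathcal{F}(E)\in\mathcal{P}_{m,G}$. For $z\in\mathcal{C}(\mathcal{T})$, $S_t(z):=\{(\tau,\xi)\,:\,\tau\in[0,t]\cap\mathcal{T}_d,\ \xi\in(z(t)-z(\tau),\infty)\cap\mathcal{X}\}$. *)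

theory Defs
  imports "HOL-Probability.Probability"
begin

definition weak_conv_seq :: "(nat \<Rightarrow> 'a::metric_space measure) \<Rightarrow> 'a measure \<Rightarrow> bool" where
  "weak_conv_seq Ms M \<longleftrightarrow>
     (\<forall>f :: 'a \<Rightarrow> real. continuous_on UNIV f \<and> bounded (range f) \<longrightarrow>
        (\<lambda>k. integral\<^sup>L (Ms k) f) \<longlonglongrightarrow> integral\<^sup>L M f)"

text \<open>Marginal on departure time and trip length: F(E).\<close>
definition inflow_marg :: "(real \<times> real \<times> real) measure \<Rightarrow> (real \<times> real) measure" where
  "inflow_marg E = distr E borel (\<lambda>(\<tau>, \<xi>, a). (\<tau>, \<xi>))"

text \<open>Marginal on trip length and desired arrival time.\<close>
definition demand_marg :: "(real \<times> real \<times> real) measure \<Rightarrow> (real \<times> real) measure" where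
  "demand_marg E = distr E borel (\<lambda>(\<tau>, \<xi>, a). (\<xi>, a))"

definition P_mG :: "real set \<Rightarrow> real set \<Rightarrow> real set \<Rightarrow> (real \<times> real) measure \<Rightarrow> real
    \<Rightarrow> (real \<times> real) measure set" where
  "P_mG Td X Ta m G = {F. prob_space F \<and> sets F = sets borel \<and> emeasure F (Td \<times> X) = 1 \<and>
     (\<forall>B \<in> sets borel. B \<subseteq> Td \<times> X \<longrightarrow> emeasure F B \<le> ennreal G * emeasure lborel B) \<and>
     (\<forall>B \<in> sets borel. B \<subseteq> X \<longrightarrow> emeasure F (Td \<times> B) = emeasure m (B \<times> Ta))}"

definition M_mG :: "real set \<Rightarrow> real set \<Rightarrow> real set \<Rightarrow> (real \<times> real) measure \<Rightarrow> real
    \<Rightarrow> (real \<times> real \<times> real) measure set" where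
  "M_mG Td X Ta m G = {E. prob_space E \<and> sets E = sets borel \<and> emeasure E (Td \<times> X \<times> Ta) = 1 \<and>
     demand_marg E = m \<and> inflow_marg E \<in> P_mG Td X Ta m G}"

definition S_set :: "real set \<Rightarrow> real set \<Rightarrow> (real \<Rightarrow> real) \<Rightarrow> real \<Rightarrow> (real \<times> real) set" where
  "S_set Td X z t = {(\<tau>, \<xi>). \<tau> \<in> {0..t} \<inter> Td \<and> \<xi> \<in> {z t - z \<tau> <..} \<inter> X}"

text \<open>The unique solution z_F in C(T) (functions on T = [0,Tmax], represented as
  functions on the reals that are continuous on T and vanish outside T).\<close>
definition z_sol :: "real \<Rightarrow> real set \<Rightarrow> real set \<Rightarrow> (real \<Rightarrow> real) \<Rightarrow> (real \<times> real) measure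
    \<Rightarrow> (real \<Rightarrow> real)" where
  "z_sol Tmax Td X V F = (THE z. continuous_on {0..Tmax} z \<and> (\<forall>t. t \<notin> {0..Tmax} \<longrightarrow> z t = 0) \<and>
     (\<forall>t \<in> {0..Tmax}. ((\<lambda>s. V (measure F (S_set Td X z s))) has_integral z t) {0..t}))"

end

theory Submission
  imports Defs
begin
lemma sect_bound:
  fixes B :: "(real\<times>real) set" and l :: "real \<Rightarrow> real"
  assumes B: "B \<in> sets borel" and ab: "a \<le> b" and d: "0 \<le> d"
    and sub: "\<And>\<tau> \<xi>. (\<tau>,\<xi>) \<in> B \<Longrightarrow> \<tau> \<in> {a..b} \<and> l \<tau> \<le> \<xi> \<and> \<xi> \<le> l \<tau> + d"
  shows "emeasure lborel B \<le> ennreal (d*(b-a))"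
proof -
  have "emeasure lborel B = emeasure (lborel \<Otimes>\<^sub>M lborel) B" by (simp add: lborel_prod)
  also have "\<dots> = (\<integral>\<^sup>+x. emeasure lborel (Pair x -` B) \<partial>lborel)"
    by (rule lborel.emeasure_pair_measure_alt) (simp only: lborel_prod, simp add: B)
  also have "\<dots> \<le> (\<integral>\<^sup>+x. ennreal d * indicator {a..b} x \<partial>lborel)"
  proof (rule nn_integral_mono)
    fix x :: real
    show "emeasure lborel (Pair x -` B) \<le> ennreal d * indicator {a..b} x"
    proof (cases "x \<in> {a..b}")
      case True
      have "Pair x -` B \<subseteq> {l x..l x + d}" using sub by auto
      then have "emeasure lborel (Pair x -` B) \<le> emeasure lborel {l x..l x + d}"
        by (intro emeasure_mono) auto
      also have "\<dots> = ennreal d" using d by simp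
      finally show ?thesis using True by simp
    next
      case False
      then have "Pair x -` B = {}" using sub by auto
      then show ?thesis by simp
    qed
  qed
  also have "\<dots> = ennreal d * ennreal (b - a)"
    using ab by (simp add: nn_integral_cmult_indicator)
  also have "\<dots> = ennreal (d*(b-a))" using d ab by (simp add: ennreal_mult)
  finally show ?thesis .
qed

locale zsetup =
  fixes T G xa xb L :: real and Td :: "real set" and V :: "real \<Rightarrow> real"
  assumes Td_closed: "closed Td" and Td_sub: "Td \<subseteq> {0..T}" and G_pos: "0 < G"
    and x_lt: "xa < xb" and V_nonneg: "\<forall>x \<ge> 0. V x \<ge> 0"
    and V_dec: "\<forall>x y. 0 \<le> x \<longrightarrow> x < y \<longrightarrow> V y < V x"
    and V_lip: "L-lipschitz_on {0..} V" and T_nonneg: "0 \<le> T"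
begin

definition goodF :: "(real\<times>real) measure \<Rightarrow> bool" where
  "goodF F \<longleftrightarrow> prob_space F \<and> sets F = sets borel \<and> emeasure F (Td \<times> {xa..xb}) = 1 \<and>
     (\<forall>B \<in> sets borel. B \<subseteq> Td \<times> {xa..xb} \<longrightarrow> emeasure F B \<le> ennreal G * emeasure lborel B)"

lemma K_borel: "Td \<times> {xa..xb} \<in> sets borel"
  using Td_closed by (intro borel_closed closed_Times) auto

lemma F_restrict:
  assumes F: "goodF F" and B: "B \<in> sets borel"
  shows "measure F B = measure F (B \<inter> (Td \<times> {xa..xb}))"
proof -
  let ?K = "Td \<times> {xa..xb}"
  interpret prob_space F using F by (simp add: goodF_def)
  have sF: "sets F = sets borel" using F by (simp add: goodF_def)
  have spF: "space F = UNIV" using sets_eq_imp_space_eq[OF sF] by simp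
  have K: "?K \<in> sets F" using K_borel sF by simp
  have BF: "B \<in> sets F" using B sF by simp
  have "measure F ?K = 1" using F by (simp add: goodF_def emeasure_eq_measure)
  then have c: "measure F (space F - ?K) = 0" using prob_compl[OF K] by simp
  have "measure F (B - ?K) \<le> measure F (space F - ?K)"
    using K BF sets.sets_into_space[OF BF] by (intro finite_measure_mono) auto
  then have z: "measure F (B - ?K) = 0" using c measure_nonneg[of F "B - ?K"] by linarith
  have "measure F B = measure F ((B \<inter> ?K) \<union> (B - ?K))" by (metis Int_Diff_Un)
  also have "\<dots> = measure F (B \<inter> ?K) + measure F (B - ?K)"
    using K BF by (intro finite_measure_Union) auto
  finally show ?thesis using z by simp
qed

lemma F_small:
  fixes l :: "real \<Rightarrow> real"
  assumes F: "goodF F" and B: "B \<in> sets borel" and ab: "a \<le> b" and d: "0 \<le> d"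
    and sub: "\<And>\<tau> \<xi>. (\<tau>,\<xi>) \<in> B \<Longrightarrow> \<tau> \<in> Td \<Longrightarrow> \<xi> \<in> {xa..xb} \<Longrightarrow>
                 \<tau> \<in> {a..b} \<and> l \<tau> \<le> \<xi> \<and> \<xi> \<le> l \<tau> + d"
  shows "measure F B \<le> G * (d * (b - a))"
proof -
  let ?K = "Td \<times> {xa..xb}"
  interpret prob_space F using F by (simp add: goodF_def)
  have BK: "B \<inter> ?K \<in> sets borel" using B K_borel by auto
  have "emeasure F (B \<inter> ?K) \<le> ennreal G * emeasure lborel (B \<inter> ?K)"
    using F BK by (auto simp: goodF_def)
  also have "\<dots> \<le> ennreal G * ennreal (d*(b-a))"
    by (intro mult_left_mono sect_bound[OF BK ab d, of l]) (use sub in auto)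
  also have "\<dots> = ennreal (G * (d*(b-a)))" using G_pos d ab by (simp add: ennreal_mult)
  finally have "measure F (B \<inter> ?K) \<le> G * (d*(b-a))"
    using G_pos d ab by (simp add: emeasure_eq_measure ennreal_le_iff)
  then show ?thesis using F_restrict[OF F B] by simp
qed

end

lemma fst_bm[measurable]: "fst \<in> borel_measurable (borel::(real\<times>real) measure)"
  by (intro borel_measurable_continuous_onI continuous_intros)
lemma snd_bm[measurable]: "snd \<in> borel_measurable (borel::(real\<times>real) measure)"
  by (intro borel_measurable_continuous_onI continuous_intros)

lemma absdiff_measure:
  assumes "finite_measure F" "A \<in> sets F" "B \<in> sets F"
    and "measure F (A - B) \<le> e" "measure F (B - A) \<le> e"
  shows "\<bar>measure F A - measure F B\<bar> \<le> e"
proof -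
  interpret finite_measure F by fact
  have 1: "measure F (A - B) = measure F A - measure F (A \<inter> B)"
    using assms by (intro finite_measure_Diff') auto
  have 2: "measure F (B - A) = measure F B - measure F (B \<inter> A)"
    using assms by (intro finite_measure_Diff') auto
  have "A \<inter> B = B \<inter> A" by auto
  moreover have "measure F (A \<inter> B) \<le> measure F A" "measure F (A \<inter> B) \<le> measure F B"
    using assms by (auto intro!: finite_measure_mono)
  ultimately show ?thesis using 1 2 assms(4,5) by (simp add: abs_le_iff)
qed

context zsetup begin

definition Sg :: "real \<Rightarrow> (real \<Rightarrow> real) \<Rightarrow> (real\<times>real) set" where
  "Sg a c = {(\<tau>, \<xi>). \<tau> \<in> {0..a} \<inter> Td \<and> \<xi> \<in> {c \<tau> <..} \<inter> {xa..xb}}"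

lemma S_set_eq: "S_set Td {xa..xb} z s = Sg s (\<lambda>\<tau>. z s - z \<tau>)"
  by (simp add: S_set_def Sg_def)

lemma Td_borel[measurable]: "Td \<in> sets borel"
  using Td_closed by (rule borel_closed)

lemma Sg_borel:
  assumes [measurable]: "c \<in> borel_measurable borel"
  shows "Sg a c \<in> sets borel"
proof -
  have "Sg a c = {x \<in> space borel. fst x \<in> {0..a} \<and> fst x \<in> Td \<and> c (fst x) < snd x \<and> xa \<le> snd x \<and> snd x \<le> xb}"
    by (auto simp: Sg_def)
  also have "\<dots> \<in> sets borel" by measurable
  finally show ?thesis .
qed

lemma Sg_diff_c:
  assumes F: "goodF F" and c1: "c1 \<in> borel_measurable borel" and c2: "c2 \<in> borel_measurable borel"
    and a: "0 \<le> a" and d: "0 \<le> \<delta>" and le: "\<And>\<tau>. \<tau> \<in> {0..a} \<Longrightarrow> \<bar>c1 \<tau> - c2 \<tau>\<bar> \<le> \<delta>"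
  shows "\<bar>measure F (Sg a c1) - measure F (Sg a c2)\<bar> \<le> G * (\<delta> * a)"
proof -
  have sF: "sets F = sets borel" using F by (simp add: goodF_def)
  have fm: "finite_measure F" using F by (simp add: goodF_def prob_space_def)
  have m1: "Sg a c1 \<in> sets borel" using Sg_borel[OF c1] .
  have m2: "Sg a c2 \<in> sets borel" using Sg_borel[OF c2] .
  have "measure F (Sg a c1 - Sg a c2) \<le> G * (\<delta> * (a - 0))"
  proof (rule F_small[OF F _ a d, of _ "\<lambda>\<tau>. c2 \<tau> - \<delta>"])
    show "Sg a c1 - Sg a c2 \<in> sets borel" using m1 m2 by auto
    fix \<tau> \<xi> assume "(\<tau>, \<xi>) \<in> Sg a c1 - Sg a c2" "\<tau> \<in> Td" "\<xi> \<in> {xa..xb}"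
    then show "\<tau> \<in> {0..a} \<and> c2 \<tau> - \<delta> \<le> \<xi> \<and> \<xi> \<le> c2 \<tau> - \<delta> + \<delta>"
      using le[of \<tau>] by (auto simp: Sg_def)
  qed
  moreover have "measure F (Sg a c2 - Sg a c1) \<le> G * (\<delta> * (a - 0))"
  proof (rule F_small[OF F _ a d, of _ "\<lambda>\<tau>. c1 \<tau> - \<delta>"])
    show "Sg a c2 - Sg a c1 \<in> sets borel" using m1 m2 by auto
    fix \<tau> \<xi> assume "(\<tau>, \<xi>) \<in> Sg a c2 - Sg a c1" "\<tau> \<in> Td" "\<xi> \<in> {xa..xb}"
    then show "\<tau> \<in> {0..a} \<and> c1 \<tau> - \<delta> \<le> \<xi> \<and> \<xi> \<le> c1 \<tau> - \<delta> + \<delta>"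
      using le[of \<tau>] by (auto simp: Sg_def)
  qed
  ultimately show ?thesis using absdiff_measure[OF fm] m1 m2 sF by simp
qed

lemma Sg_diff_a:
  assumes F: "goodF F" and c: "c \<in> borel_measurable borel" and ab: "a \<le> b"
  shows "\<bar>measure F (Sg a c) - measure F (Sg b c)\<bar> \<le> G * ((xb - xa) * (b - a))"
proof -
  have sF: "sets F = sets borel" using F by (simp add: goodF_def)
  have fm: "finite_measure F" using F by (simp add: goodF_def prob_space_def)
  have m1: "Sg a c \<in> sets borel" using Sg_borel[OF c] .
  have m2: "Sg b c \<in> sets borel" using Sg_borel[OF c] .
  have d: "0 \<le> xb - xa" using x_lt by simp
  have e: "Sg a c - Sg b c = {}" using ab by (auto simp: Sg_def)
  have "measure F (Sg a c - Sg b c) = 0" by (simp only: e measure_empty)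
  then have "measure F (Sg a c - Sg b c) \<le> G * ((xb - xa) * (b - a))"
    using G_pos d ab by simp
  moreover have "measure F (Sg b c - Sg a c) \<le> G * ((xb - xa) * (b - a))"
  proof (rule F_small[OF F _ ab d, of _ "\<lambda>\<tau>. xa"])
    show "Sg b c - Sg a c \<in> sets borel" using m1 m2 by auto
    fix \<tau> \<xi> assume "(\<tau>, \<xi>) \<in> Sg b c - Sg a c" "\<tau> \<in> Td" "\<xi> \<in> {xa..xb}"
    then show "\<tau> \<in> {a..b} \<and> xa \<le> \<xi> \<and> \<xi> \<le> xa + (xb - xa)"
      by (auto simp: Sg_def)
  qed
  ultimately show ?thesis using absdiff_measure[OF fm] m1 m2 sF by simp
qed

end

context zsetup begin

definition Cset :: "(real \<Rightarrow> real) \<Rightarrow> bool" where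
  "Cset z \<longleftrightarrow> continuous_on {0..T} z \<and> (\<forall>t. t \<notin> {0..T} \<longrightarrow> z t = 0)"

definition mu :: "(real\<times>real) measure \<Rightarrow> (real \<Rightarrow> real) \<Rightarrow> real \<Rightarrow> real" where
  "mu F z s = measure F (S_set Td {xa..xb} z s)"

definition gi :: "(real\<times>real) measure \<Rightarrow> (real \<Rightarrow> real) \<Rightarrow> real \<Rightarrow> real" where
  "gi F z s = V (mu F z s)"

definition Phi :: "(real\<times>real) measure \<Rightarrow> (real \<Rightarrow> real) \<Rightarrow> real \<Rightarrow> real" where
  "Phi F z t = (if t \<in> {0..T} then integral {0..t} (gi F z) else 0)"

lemma Cset_meas:
  assumes "Cset z" shows "z \<in> borel_measurable borel"
proof -
  have "(\<lambda>x. indicator {0..T} x *\<^sub>R z x) \<in> borel_measurable borel"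
    using assms by (intro borel_measurable_continuous_on_indicator) (auto simp: Cset_def)
  moreover have "(\<lambda>x. indicator {0..T} x *\<^sub>R z x) = z"
    using assms by (auto simp: Cset_def indicator_def fun_eq_iff)
  ultimately show ?thesis by simp
qed

lemma c_meas:
  assumes "Cset z" shows "(\<lambda>\<tau>. z s - z \<tau>) \<in> borel_measurable borel"
  using Cset_meas[OF assms] by measurable

lemma mu_eq: "mu F z s = measure F (Sg s (\<lambda>\<tau>. z s - z \<tau>))"
  by (simp add: mu_def S_set_eq)

lemma mu_range:
  assumes "goodF F" shows "0 \<le> mu F z s" "mu F z s \<le> 1"
proof -
  interpret prob_space F using assms by (simp add: goodF_def)
  show "0 \<le> mu F z s" by (simp add: mu_def)
  show "mu F z s \<le> 1" by (simp add: mu_def)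
qed

lemma mu_lip_z:
  assumes F: "goodF F" and z1: "Cset z1" and z2: "Cset z2" and s: "0 \<le> s" and K: "0 \<le> K"
    and le: "\<And>\<tau>. \<tau> \<in> {0..s} \<Longrightarrow> \<bar>z1 \<tau> - z2 \<tau>\<bar> \<le> K"
  shows "\<bar>mu F z1 s - mu F z2 s\<bar> \<le> G * (2 * K * s)"
proof -
  have "\<bar>measure F (Sg s (\<lambda>\<tau>. z1 s - z1 \<tau>)) - measure F (Sg s (\<lambda>\<tau>. z2 s - z2 \<tau>))\<bar> \<le> G * ((2*K) * s)"
  proof (rule Sg_diff_c[OF F c_meas[OF z1] c_meas[OF z2] s])
    show "0 \<le> 2 * K" using K by simp
    fix \<tau> assume t: "\<tau> \<in> {0..s}"
    have "\<bar>z1 s - z2 s\<bar> \<le> K" using le[of s] s by auto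
    moreover have "\<bar>z1 \<tau> - z2 \<tau>\<bar> \<le> K" using le[OF t] .
    ultimately show "\<bar>z1 s - z1 \<tau> - (z2 s - z2 \<tau>)\<bar> \<le> 2 * K" by linarith
  qed
  then show ?thesis by (simp add: mu_eq)
qed

lemma mu_diff_s:
  assumes F: "goodF F" and z: "Cset z" and s: "0 \<le> s" "s \<le> T" and s': "0 \<le> s'" "s' \<le> T"
  shows "\<bar>mu F z s' - mu F z s\<bar> \<le> G * (\<bar>z s' - z s\<bar> * T) + G * ((xb - xa) * \<bar>s' - s\<bar>)"
proof -
  have a: "\<bar>measure F (Sg s' (\<lambda>\<tau>. z s' - z \<tau>)) - measure F (Sg s' (\<lambda>\<tau>. z s - z \<tau>))\<bar>
      \<le> G * (\<bar>z s' - z s\<bar> * s')"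
    by (rule Sg_diff_c[OF F c_meas[OF z] c_meas[OF z] s'(1)]) auto
  have "G * (\<bar>z s' - z s\<bar> * s') \<le> G * (\<bar>z s' - z s\<bar> * T)"
    using G_pos s' by (intro mult_left_mono) (auto intro: mult_left_mono)
  with a have a': "\<bar>measure F (Sg s' (\<lambda>\<tau>. z s' - z \<tau>)) - measure F (Sg s' (\<lambda>\<tau>. z s - z \<tau>))\<bar>
      \<le> G * (\<bar>z s' - z s\<bar> * T)" by linarith
  have b: "\<bar>measure F (Sg s' (\<lambda>\<tau>. z s - z \<tau>)) - measure F (Sg s (\<lambda>\<tau>. z s - z \<tau>))\<bar>
      \<le> G * ((xb - xa) * \<bar>s' - s\<bar>)"
  proof (cases "s' \<le> s")
    case True
    then show ?thesis using Sg_diff_a[OF F c_meas[OF z] True] by simp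
  next
    case False
    then show ?thesis using Sg_diff_a[OF F c_meas[OF z], of s s'] by (simp add: abs_minus_commute)
  qed
  show ?thesis using a' b by (simp add: mu_eq)
qed

lemma mu_cont:
  assumes F: "goodF F" and z: "Cset z"
  shows "continuous_on {0..T} (mu F z)"
  unfolding continuous_on_def
proof
  fix s assume s: "s \<in> {0..T}"
  have zc: "(z \<longlongrightarrow> z s) (at s within {0..T})"
    using z s by (auto simp: Cset_def continuous_on_def)
  have "((\<lambda>s'. G * (\<bar>z s' - z s\<bar> * T) + G * ((xb - xa) * \<bar>s' - s\<bar>)) \<longlongrightarrow>
          G * (\<bar>z s - z s\<bar> * T) + G * ((xb - xa) * \<bar>s - s\<bar>)) (at s within {0..T})"
    by (intro tendsto_intros zc)
  then have h: "((\<lambda>s'. G * (\<bar>z s' - z s\<bar> * T) + G * ((xb - xa) * \<bar>s' - s\<bar>)) \<longlongrightarrow> 0) (at s within {0..T})"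
    by simp
  have "((\<lambda>s'. mu F z s' - mu F z s) \<longlongrightarrow> 0) (at s within {0..T})"
  proof (rule Lim_null_comparison[OF _ h])
    show "\<forall>\<^sub>F x in at s within {0..T}. norm (mu F z x - mu F z s) \<le> G * (\<bar>z x - z s\<bar> * T) + G * ((xb - xa) * \<bar>x - s\<bar>)"
      unfolding eventually_at_filter
      by (rule always_eventually) (use s mu_diff_s[OF F z] in auto)
  qed
  then show "(mu F z \<longlongrightarrow> mu F z s) (at s within {0..T})"
    by (simp add: LIM_zero_iff)
qed

lemma V_cont: "continuous_on {0..} V"
  using V_lip by (rule lipschitz_on_continuous_on)

lemma gi_cont:
  assumes F: "goodF F" and z: "Cset z"
  shows "continuous_on {0..T} (gi F z)"
  unfolding gi_def
  by (rule continuous_on_compose2[OF V_cont mu_cont[OF F z]]) (auto intro: mu_range[OF F])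

lemma gi_bounds:
  assumes F: "goodF F" shows "0 \<le> gi F z s" "gi F z s \<le> V 0"
proof -
  have m: "0 \<le> mu F z s" using mu_range[OF F] by simp
  show "0 \<le> gi F z s" using V_nonneg m by (simp add: gi_def)
  show "gi F z s \<le> V 0"
  proof (cases "mu F z s = 0")
    case True then show ?thesis by (simp add: gi_def)
  next
    case False then have "0 < mu F z s" using m by simp
    then show ?thesis using V_dec by (simp add: gi_def less_imp_le)
  qed
qed

lemma gi_integrable:
  assumes F: "goodF F" and z: "Cset z" and t: "t \<le> T"
  shows "gi F z integrable_on {0..t}"
  by (rule integrable_continuous_interval, rule continuous_on_subset[OF gi_cont[OF F z]]) (use t in auto)

lemma Phi_Cset:
  assumes F: "goodF F" and z: "Cset z"
  shows "Cset (Phi F z)"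
proof -
  have "continuous_on {0..T} (\<lambda>t. integral {0..t} (gi F z))"
    by (rule indefinite_integral_continuous_1, rule gi_integrable[OF F z]) simp
  then have "continuous_on {0..T} (Phi F z)"
    by (rule continuous_on_eq) (simp add: Phi_def)
  then show ?thesis by (simp add: Cset_def Phi_def)
qed

lemma Phi_bound:
  assumes F: "goodF F" and z: "Cset z"
  shows "\<bar>Phi F z t\<bar> \<le> T * V 0"
proof (cases "t \<in> {0..T}")
  case True
  have "integral {0..t} (gi F z) \<le> integral {0..t} (\<lambda>_. V 0)"
    using True gi_bounds[OF F] by (intro integral_le gi_integrable[OF F z]) auto
  also have "\<dots> = t * V 0" using True by simp
  also have "\<dots> \<le> T * V 0" using True V_nonneg by (intro mult_right_mono) auto
  finally have 1: "integral {0..t} (gi F z) \<le> T * V 0" .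
  have "0 \<le> integral {0..t} (gi F z)"
    using True gi_bounds[OF F] by (intro integral_nonneg gi_integrable[OF F z]) auto
  then show ?thesis using 1 True by (simp add: Phi_def)
next
  case False then have "Phi F z t = 0" unfolding Phi_def by (simp only: if_False)
  then show ?thesis using V_nonneg T_nonneg by simp
qed

end

context zsetup begin

definition lam :: real where "lam = 4 * L * G * T + 1"

lemma L_nonneg: "0 \<le> L" using V_lip by (rule lipschitz_on_nonneg)

lemma lam_pos: "0 < lam"
  using L_nonneg G_pos T_nonneg by (simp add: lam_def add_nonneg_pos)

lemma exp_integral:
  assumes t: "0 \<le> t"
  shows "((\<lambda>s. exp (lam * s)) has_integral (exp (lam * t) / lam - exp (lam * 0) / lam)) {0..t}"
proof (rule fundamental_theorem_of_calculus[OF t])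
  fix x assume "x \<in> {0..t}"
  have "((\<lambda>s. exp (lam * s) / lam) has_real_derivative (exp (lam * x) * (lam * 1) / lam)) (at x within {0..t})"
    using lam_pos by (intro derivative_eq_intros) auto
  then show "((\<lambda>s. exp (lam * s) / lam) has_vector_derivative exp (lam * x)) (at x within {0..t})"
    using lam_pos by (simp add: has_real_derivative_iff_has_vector_derivative)
qed

lemma mu_diff_cont:
  assumes F1: "goodF F1" and F2: "goodF F2" and z1: "Cset z1" and z2: "Cset z2"
  shows "continuous_on {0..T} (\<lambda>s. L * \<bar>mu F1 z1 s - mu F2 z2 s\<bar>)"
  by (intro continuous_intros mu_cont[OF F1 z1] mu_cont[OF F2 z2])

lemma mu_diff_int:
  assumes F1: "goodF F1" and F2: "goodF F2" and z1: "Cset z1" and z2: "Cset z2" and t: "t \<le> T"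
  shows "(\<lambda>s. L * \<bar>mu F1 z1 s - mu F2 z2 s\<bar>) integrable_on {0..t}"
  by (rule integrable_continuous_interval, rule continuous_on_subset[OF mu_diff_cont[OF F1 F2 z1 z2]]) (use t in auto)

lemma core:
  assumes F: "goodF F" and z1: "Cset z1" and z2: "Cset z2" and K: "0 \<le> K"
    and le: "\<And>\<tau>. \<tau> \<in> {0..T} \<Longrightarrow> \<bar>z1 \<tau> - z2 \<tau>\<bar> \<le> K * exp (lam * \<tau>)"
    and t: "t \<in> {0..T}"
  shows "integral {0..t} (\<lambda>s. L * \<bar>mu F z1 s - mu F z2 s\<bar>) \<le> K / 2 * exp (lam * t)"
proof -
  define c where "c = 2 * L * G * T * K"
  have c0: "0 \<le> c" using L_nonneg G_pos T_nonneg K by (simp add: c_def)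
  have pt: "L * \<bar>mu F z1 s - mu F z2 s\<bar> \<le> c * exp (lam * s)" if s: "s \<in> {0..t}" for s
  proof -
    have sT: "s \<le> T" using s t by auto
    have "\<bar>mu F z1 s - mu F z2 s\<bar> \<le> G * (2 * (K * exp (lam * s)) * s)"
    proof (rule mu_lip_z[OF F z1 z2])
      show "0 \<le> s" using s by simp
      show "0 \<le> K * exp (lam * s)" using K by simp
      fix \<tau> assume tau: "\<tau> \<in> {0..s}"
      have "\<bar>z1 \<tau> - z2 \<tau>\<bar> \<le> K * exp (lam * \<tau>)" using le tau sT by auto
      also have "\<dots> \<le> K * exp (lam * s)" using K lam_pos tau by (intro mult_left_mono) auto
      finally show "\<bar>z1 \<tau> - z2 \<tau>\<bar> \<le> K * exp (lam * s)" .
    qed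
    also have "\<dots> \<le> G * (2 * (K * exp (lam * s)) * T)"
      using G_pos K sT s by (intro mult_left_mono) (auto intro!: mult_left_mono)
    finally have "L * \<bar>mu F z1 s - mu F z2 s\<bar> \<le> L * (G * (2 * (K * exp (lam * s)) * T))"
      using L_nonneg by (simp add: mult_left_mono)
    then show ?thesis by (simp add: c_def algebra_simps)
  qed
  have ei: "((\<lambda>s. c * exp (lam * s)) has_integral (c * (exp (lam * t) / lam - exp (lam * 0) / lam))) {0..t}"
    by (rule has_integral_mult_right[OF exp_integral]) (use t in simp)
  have "integral {0..t} (\<lambda>s. L * \<bar>mu F z1 s - mu F z2 s\<bar>) \<le> integral {0..t} (\<lambda>s. c * exp (lam * s))"
    by (rule integral_le[OF mu_diff_int[OF F F z1 z2] has_integral_integrable[OF ei]]) (use t pt in auto)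
  also have "\<dots> = c * (exp (lam * t) / lam - 1 / lam)" using integral_unique[OF ei] by simp
  also have "\<dots> \<le> c * (exp (lam * t) / lam)" using c0 lam_pos by (intro mult_left_mono) auto
  also have "\<dots> \<le> K / 2 * exp (lam * t)"
  proof -
    have "c \<le> K / 2 * lam" using K unfolding c_def lam_def by (simp add: algebra_simps)
    then have "c * exp (lam * t) \<le> K / 2 * lam * exp (lam * t)" by (intro mult_right_mono) auto
    then have "c * exp (lam * t) / lam \<le> K / 2 * lam * exp (lam * t) / lam"
      using lam_pos by (intro divide_right_mono) auto
    also have "\<dots> = K / 2 * exp (lam * t)" using lam_pos by simp
    finally show ?thesis by simp
  qed
  finally show ?thesis .
qed

lemma Phi_diff:
  assumes F1: "goodF F1" and F2: "goodF F2" and z1: "Cset z1" and z2: "Cset z2" and t: "t \<in> {0..T}"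
  shows "\<bar>Phi F1 z1 t - Phi F2 z2 t\<bar> \<le> integral {0..t} (\<lambda>s. L * \<bar>mu F1 z1 s - mu F2 z2 s\<bar>)"
proof -
  have tT: "t \<le> T" using t by simp
  have eq: "Phi F1 z1 t - Phi F2 z2 t = integral {0..t} (\<lambda>s. gi F1 z1 s - gi F2 z2 s)"
    using t by (simp add: Phi_def integral_diff gi_integrable[OF F1 z1 tT] gi_integrable[OF F2 z2 tT])
  have nb: "norm (integral {0..t} (\<lambda>s. gi F1 z1 s - gi F2 z2 s)) \<le> integral {0..t} (\<lambda>s. L * \<bar>mu F1 z1 s - mu F2 z2 s\<bar>)"
  proof (rule integral_norm_bound_integral)
    show "(\<lambda>s. gi F1 z1 s - gi F2 z2 s) integrable_on {0..t}"
      by (intro integrable_diff gi_integrable[OF F1 z1 tT] gi_integrable[OF F2 z2 tT])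
    show "(\<lambda>s. L * \<bar>mu F1 z1 s - mu F2 z2 s\<bar>) integrable_on {0..t}"
      by (rule mu_diff_int[OF F1 F2 z1 z2 tT])
    fix s assume "s \<in> {0..t}"
    have "dist (V (mu F1 z1 s)) (V (mu F2 z2 s)) \<le> L * dist (mu F1 z1 s) (mu F2 z2 s)"
      by (rule lipschitz_onD[OF V_lip]) (auto intro: mu_range[OF F1] mu_range[OF F2])
    then show "norm (gi F1 z1 s - gi F2 z2 s) \<le> L * \<bar>mu F1 z1 s - mu F2 z2 s\<bar>"
      by (simp add: gi_def dist_real_def)
  qed
  show ?thesis using eq nb by simp
qed

lemma contraction:
  assumes F: "goodF F" and z1: "Cset z1" and z2: "Cset z2" and K: "0 \<le> K"
    and le: "\<And>\<tau>. \<tau> \<in> {0..T} \<Longrightarrow> \<bar>z1 \<tau> - z2 \<tau>\<bar> \<le> K * exp (lam * \<tau>)"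
    and t: "t \<in> {0..T}"
  shows "\<bar>Phi F z1 t - Phi F z2 t\<bar> \<le> K / 2 * exp (lam * t)"
  using Phi_diff[OF F F z1 z2 t] core[OF F z1 z2 K le t] by linarith

lemma iterate_bound:
  assumes a: "0 \<le> a" and B: "0 \<le> B" and init: "\<And>\<tau>. \<tau> \<in> {0..T} \<Longrightarrow> \<bar>w \<tau>\<bar> \<le> B"
    and step: "\<And>K. 0 \<le> K \<Longrightarrow> (\<forall>\<tau>\<in>{0..T}. \<bar>w \<tau>\<bar> \<le> K * exp (lam * \<tau>)) \<Longrightarrow>
                   (\<forall>\<tau>\<in>{0..T}. \<bar>w \<tau>\<bar> \<le> (K / 2 + a) * exp (lam * \<tau>))"
    and t: "t \<in> {0..T}"
  shows "\<bar>w t\<bar> \<le> 2 * a * exp (lam * t)"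
proof -
  have n: "\<forall>\<tau>\<in>{0..T}. \<bar>w \<tau>\<bar> \<le> (B / 2 ^ n + 2 * a) * exp (lam * \<tau>)" for n
  proof (induction n)
    case 0
    show ?case
    proof
      fix \<tau> assume tau: "\<tau> \<in> {0..T}"
      have "1 \<le> exp (lam * \<tau>)" using lam_pos tau by auto
      have "B \<le> B + 2 * a" using a by simp
      also have "\<dots> = (B + 2 * a) * 1" by simp
      also have "\<dots> \<le> (B + 2 * a) * exp (lam * \<tau>)"
        using \<open>1 \<le> exp (lam * \<tau>)\<close> a B by (intro mult_left_mono) auto
      finally have "B \<le> (B + 2 * a) * exp (lam * \<tau>)" .
      then show "\<bar>w \<tau>\<bar> \<le> (B / 2 ^ 0 + 2 * a) * exp (lam * \<tau>)" using init[OF tau] by simp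
    qed
  next
    case (Suc n)
    have nn: "0 \<le> B / 2 ^ n + 2 * a" using a B by simp
    have e: "(B / 2 ^ n + 2 * a) / 2 + a = B / 2 ^ Suc n + 2 * a" by (simp add: field_simps)
    from step[OF nn Suc.IH] show ?case by (simp only: e)
  qed
  have "(\<lambda>n. (B / 2 ^ n + 2 * a) * exp (lam * t)) \<longlonglongrightarrow> (0 + 2 * a) * exp (lam * t)"
    by (intro tendsto_intros LIMSEQ_divide_realpow_zero) auto
  then have lim: "(\<lambda>n. (B / 2 ^ n + 2 * a) * exp (lam * t)) \<longlonglongrightarrow> 2 * a * exp (lam * t)"
    by simp
  show ?thesis
    by (rule LIMSEQ_le_const[OF lim]) (use n t in blast)
qed

end

context zsetup begin

definition sol :: "(real\<times>real) measure \<Rightarrow> (real \<Rightarrow> real) \<Rightarrow> bool" where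
  "sol F z \<longleftrightarrow> continuous_on {0..T} z \<and> (\<forall>t. t \<notin> {0..T} \<longrightarrow> z t = 0) \<and>
     (\<forall>t \<in> {0..T}. ((\<lambda>s. V (measure F (S_set Td {xa..xb} z s))) has_integral z t) {0..t})"

lemma gi_eq: "(\<lambda>s. V (measure F (S_set Td {xa..xb} z s))) = gi F z"
  by (simp add: fun_eq_iff gi_def mu_def)

lemma sol_imp_fix:
  assumes F: "goodF F" and s: "sol F z"
  shows "Cset z" "\<And>t. t \<in> {0..T} \<Longrightarrow> Phi F z t = z t"
proof -
  show "Cset z" using s by (simp add: sol_def Cset_def)
  fix t assume t: "t \<in> {0..T}"
  have "(gi F z has_integral z t) {0..t}" using s t by (simp add: sol_def gi_eq)
  then show "Phi F z t = z t" using t by (simp add: Phi_def integral_unique)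
qed

lemma fix_imp_sol:
  assumes F: "goodF F" and c: "Cset z" and fx: "\<And>t. t \<in> {0..T} \<Longrightarrow> Phi F z t = z t"
  shows "sol F z"
proof -
  have "\<forall>t \<in> {0..T}. (gi F z has_integral z t) {0..t}"
  proof
    fix t assume t: "t \<in> {0..T}"
    have "(gi F z has_integral integral {0..t} (gi F z)) {0..t}"
      using gi_integrable[OF F c] t by (simp add: integrable_integral)
    moreover have "integral {0..t} (gi F z) = z t" using fx[OF t] t by (simp add: Phi_def)
    ultimately show "(gi F z has_integral z t) {0..t}" by simp
  qed
  then show ?thesis using c by (simp add: sol_def Cset_def gi_eq)
qed

lemma sol_bound:
  assumes F: "goodF F" and s: "sol F z" and t: "t \<in> {0..T}"
  shows "\<bar>z t\<bar> \<le> T * V 0"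
  using Phi_bound[OF F sol_imp_fix(1)[OF F s], of t] sol_imp_fix(2)[OF F s t] by simp

lemma V0_nonneg: "0 \<le> V 0" using V_nonneg by simp

lemma sol_unique:
  assumes F: "goodF F" and s1: "sol F z1" and s2: "sol F z2"
  shows "z1 = z2"
proof
  fix t
  have c1: "Cset z1" and c2: "Cset z2" using sol_imp_fix(1) F s1 s2 by auto
  show "z1 t = z2 t"
  proof (cases "t \<in> {0..T}")
    case False then show ?thesis using c1 c2 by (simp add: Cset_def)
  next
    case True
    have "\<bar>z1 t - z2 t\<bar> \<le> 2 * 0 * exp (lam * t)"
    proof (rule iterate_bound[where w="\<lambda>t. z1 t - z2 t" and B="2 * (T * V 0)"])
      show "0 \<le> 2 * (T * V 0)" using T_nonneg V0_nonneg by simp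
      fix \<tau> assume tau: "\<tau> \<in> {0..T}"
      show "\<bar>z1 \<tau> - z2 \<tau>\<bar> \<le> 2 * (T * V 0)"
        using sol_bound[OF F s1 tau] sol_bound[OF F s2 tau] by linarith
    next
      fix K :: real assume K: "0 \<le> K" and le: "\<forall>\<tau>\<in>{0..T}. \<bar>z1 \<tau> - z2 \<tau>\<bar> \<le> K * exp (lam * \<tau>)"
      show "\<forall>\<tau>\<in>{0..T}. \<bar>z1 \<tau> - z2 \<tau>\<bar> \<le> (K / 2 + 0) * exp (lam * \<tau>)"
      proof
        fix \<tau> assume tau: "\<tau> \<in> {0..T}"
        have "\<bar>Phi F z1 \<tau> - Phi F z2 \<tau>\<bar> \<le> K / 2 * exp (lam * \<tau>)"
          by (rule contraction[OF F c1 c2 K _ tau]) (use le in auto)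
        then show "\<bar>z1 \<tau> - z2 \<tau>\<bar> \<le> (K / 2 + 0) * exp (lam * \<tau>)"
          using sol_imp_fix(2)[OF F s1 tau] sol_imp_fix(2)[OF F s2 tau] by simp
      qed
    qed (use True in auto)
    then show ?thesis by simp
  qed
qed

definition pic :: "(real\<times>real) measure \<Rightarrow> nat \<Rightarrow> real \<Rightarrow> real" where
  "pic F n = (Phi F ^^ n) (\<lambda>_. 0)"

lemma pic_0: "pic F 0 = (\<lambda>_. 0)" by (simp add: pic_def)
lemma pic_Suc: "pic F (Suc n) = Phi F (pic F n)" by (simp add: pic_def)

lemma pic_Cset: assumes F: "goodF F" shows "Cset (pic F n)"
proof (induction n)
  case 0 show ?case by (simp add: pic_0 Cset_def)
next
  case (Suc n) then show ?case by (simp add: pic_Suc Phi_Cset[OF F])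
qed

lemma pic_diff:
  assumes F: "goodF F"
  shows "\<forall>\<tau>\<in>{0..T}. \<bar>pic F (Suc n) \<tau> - pic F n \<tau>\<bar> \<le> (T * V 0 / 2 ^ n) * exp (lam * \<tau>)"
proof (induction n)
  case 0
  show ?case
  proof
    fix \<tau> assume tau: "\<tau> \<in> {0..T}"
    have "1 \<le> exp (lam * \<tau>)" using lam_pos tau by auto
    then have "T * V 0 * 1 \<le> T * V 0 * exp (lam * \<tau>)"
      using T_nonneg V0_nonneg by (intro mult_left_mono) auto
    moreover have "\<bar>pic F (Suc 0) \<tau>\<bar> \<le> T * V 0"
      unfolding pic_Suc by (rule Phi_bound[OF F pic_Cset[OF F]])
    ultimately show "\<bar>pic F (Suc 0) \<tau> - pic F 0 \<tau>\<bar> \<le> (T * V 0 / 2 ^ 0) * exp (lam * \<tau>)"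
      by (simp add: pic_0)
  qed
next
  case (Suc n)
  show ?case
  proof
    fix \<tau> assume tau: "\<tau> \<in> {0..T}"
    have "\<bar>Phi F (pic F (Suc n)) \<tau> - Phi F (pic F n) \<tau>\<bar> \<le> (T * V 0 / 2 ^ n) / 2 * exp (lam * \<tau>)"
      by (rule contraction[OF F pic_Cset[OF F] pic_Cset[OF F] _ _ tau])
         (use Suc.IH T_nonneg V0_nonneg in auto)
    moreover have "(T * V 0 / 2 ^ n) / 2 = T * V 0 / 2 ^ Suc n" by simp
    ultimately show "\<bar>pic F (Suc (Suc n)) \<tau> - pic F (Suc n) \<tau>\<bar> \<le> (T * V 0 / 2 ^ Suc n) * exp (lam * \<tau>)"
      by (simp only: pic_Suc[of F "Suc n"] pic_Suc[of F n])
  qed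
qed

lemma sol_exists:
  assumes F: "goodF F"
  shows "\<exists>z. sol F z"
proof -
  define M where "M n = T * V 0 * exp (lam * T) * (1/2) ^ n" for n :: nat
  have Mb: "norm (pic F (Suc n) x - pic F n x) \<le> M n" if x: "x \<in> {0..T}" for n x
  proof -
    have "\<bar>pic F (Suc n) x - pic F n x\<bar> \<le> (T * V 0 / 2 ^ n) * exp (lam * x)"
      using pic_diff[OF F] x by blast
    also have "\<dots> \<le> (T * V 0 / 2 ^ n) * exp (lam * T)"
      using x lam_pos T_nonneg V0_nonneg by (intro mult_left_mono) auto
    also have "\<dots> = M n" by (simp add: M_def power_one_over field_simps)
    finally show ?thesis by simp
  qed
  have Ms: "summable M"
    unfolding M_def by (intro summable_mult summable_geometric) simp
  have ul: "uniform_limit {0..T} (\<lambda>n x. \<Sum>i<n. pic F (Suc i) x - pic F i x)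
        (\<lambda>x. suminf (\<lambda>i. pic F (Suc i) x - pic F i x)) sequentially"
    by (rule Weierstrass_m_test[OF Mb Ms])
  define g where "g = (\<lambda>x. suminf (\<lambda>i. pic F (Suc i) x - pic F i x))"
  define z where "z x = (if x \<in> {0..T} then g x else 0)" for x
  have tele: "(\<lambda>n x. \<Sum>i<n. pic F (Suc i) x - pic F i x) = pic F"
  proof (intro ext)
    fix n x
    have "(\<Sum>i<n. pic F (Suc i) x - pic F i x) = pic F n x - pic F 0 x"
      by (rule sum_lessThan_telescope[where f="\<lambda>i. pic F i x"])
    then show "(\<Sum>i<n. pic F (Suc i) x - pic F i x) = pic F n x" by (simp add: pic_0)
  qed
  have ulz: "uniform_limit {0..T} (pic F) z sequentially"
    using ul unfolding tele g_def[symmetric]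
    by (rule uniform_limit_cong'[THEN iffD1, rotated -1]) (auto simp: z_def)
  have zc: "continuous_on {0..T} z"
    by (rule uniform_limit_theorem[OF _ ulz]) (auto intro: always_eventually pic_Cset[OF F, unfolded Cset_def, THEN conjunct1])
  have cz: "Cset z" using zc by (simp add: Cset_def z_def)
  have fx: "Phi F z t = z t" if t: "t \<in> {0..T}" for t
  proof -
    have l1: "(\<lambda>n. pic F (Suc n) t) \<longlonglongrightarrow> z t"
      using tendsto_uniform_limitI[OF ulz t] by (rule LIMSEQ_Suc)
    have l2: "(\<lambda>n. pic F (Suc n) t) \<longlonglongrightarrow> Phi F z t"
      unfolding pic_Suc tendsto_iff
    proof (intro allI impI)
      fix e :: real assume e: "0 < e"
      define e' where "e' = e / exp (lam * T)"
      have e': "0 < e'" using e by (simp add: e'_def)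
      show "\<forall>\<^sub>F n in sequentially. dist (Phi F (pic F n) t) (Phi F z t) < e"
        using uniform_limitD[OF ulz e']
      proof eventually_elim
        case (elim n)
        have "\<bar>Phi F (pic F n) t - Phi F z t\<bar> \<le> e' / 2 * exp (lam * t)"
        proof (rule contraction[OF F pic_Cset[OF F] cz _ _ t])
          show "0 \<le> e'" using e' by simp
          fix \<tau> assume tau: "\<tau> \<in> {0..T}"
          have "\<bar>pic F n \<tau> - z \<tau>\<bar> < e'" using elim tau by (simp add: dist_real_def)
          also have "e' \<le> e' * exp (lam * \<tau>)" using e' lam_pos tau by simp
          finally show "\<bar>pic F n \<tau> - z \<tau>\<bar> \<le> e' * exp (lam * \<tau>)" by simp
        qed
        also have "\<dots> \<le> e' / 2 * exp (lam * T)" using e' lam_pos t by simp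
        also have "\<dots> = e / 2" using e'_def by simp
        finally show ?case using e by (simp add: dist_real_def)
      qed
    qed
    show ?thesis using LIMSEQ_unique[OF l2 l1] .
  qed
  show ?thesis using fix_imp_sol[OF F cz fx] by blast
qed

lemma z_sol_spec:
  assumes F: "goodF F"
  shows "sol F (z_sol T Td {xa..xb} V F)"
proof -
  have "\<exists>!z. sol F z" using sol_exists[OF F] sol_unique[OF F] by blast
  then have "sol F (THE z. sol F z)" by (rule theI')
  then show ?thesis by (simp add: z_sol_def sol_def)
qed

end

lemma port_upper:
  fixes Ms :: "nat \<Rightarrow> 'a::metric_space measure" and M :: "'a measure"
  assumes Pk: "\<And>k. prob_space (Ms k)" and Sk: "\<And>k. sets (Ms k) = sets borel"
    and P: "prob_space M" and S: "sets M = sets borel"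
    and conv: "\<And>f::'a \<Rightarrow> real. continuous_on UNIV f \<Longrightarrow> bounded (range f) \<Longrightarrow>
                 (\<lambda>k. integral\<^sup>L (Ms k) f) \<longlonglongrightarrow> integral\<^sup>L M f"
    and C: "closed C" and A: "A \<in> sets borel" and AC: "A \<subseteq> C" and e: "0 < e"
  shows "eventually (\<lambda>k. measure (Ms k) A < measure M C + e) sequentially"
proof (cases "C = {}")
  case True
  then have "A = {}" using AC by auto
  moreover have "0 < measure M C + e" using e measure_nonneg[of M C] by linarith
  ultimately show ?thesis by simp
next
  case Cne: False
  interpret M: prob_space M by (rule P)
  define f where "f n x = max 0 (1 - real n * infdist x C)" for n :: nat and x :: 'a
  have fc: "continuous_on UNIV (f n)" for n
    unfolding f_def by (intro continuous_intros continuous_on_infdist continuous_on_id)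
  have f01: "0 \<le> f n x" "f n x \<le> 1" for n x
    unfolding f_def using infdist_nonneg[of x C] by auto
  have fb: "bounded (range (f n))" for n
    unfolding bounded_real using f01 by (intro exI[of _ 1]) auto
  have fC: "f n x = 1" if "x \<in> C" for n x using that by (simp add: f_def)
  have fmeas: "f n \<in> borel_measurable N" if "sets N = sets borel" for n N
    using borel_measurable_continuous_onI[OF fc] measurable_cong_sets[OF that refl] by blast
  have Cb: "C \<in> sets borel" using C by (rule borel_closed)
  have lim: "(\<lambda>n. f n x) \<longlonglongrightarrow> indicator C x" for x
  proof (cases "x \<in> C")
    case True then show ?thesis using fC by simp
  next
    case False
    then have d: "0 < infdist x C" using infdist_pos_not_in_closed[OF C Cne] by simp
    obtain N where N: "1 < real N * infdist x C" using ex_less_of_nat_mult[OF d] by blast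
    have "eventually (\<lambda>n. f n x = indicator C x) sequentially"
      unfolding eventually_sequentially
    proof (intro exI allI impI)
      fix n assume "N \<le> n"
      then have "real N * infdist x C \<le> real n * infdist x C"
        using d by (intro mult_right_mono) auto
      then show "f n x = indicator C x" using N False by (simp add: f_def)
    qed
    then show ?thesis by (rule tendsto_eventually)
  qed
  have "(\<lambda>n. integral\<^sup>L M (f n)) \<longlonglongrightarrow> integral\<^sup>L M (indicator C)"
  proof (rule integral_dominated_convergence[where w="\<lambda>_. 1"])
    show "indicator C \<in> borel_measurable M" using Cb S by (intro borel_measurable_indicator) simp
    show "f n \<in> borel_measurable M" for n using fmeas[OF S] .
    show "integrable M (\<lambda>_. 1::real)" by simp
    show "AE x in M. (\<lambda>n. f n x) \<longlonglongrightarrow> indicator C x" using lim by simp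
    show "AE x in M. norm (f n x) \<le> 1" for n using f01 by simp
  qed
  moreover have "integral\<^sup>L M (indicator C) = measure M C"
    using sets_eq_imp_space_eq[OF S] by simp
  ultimately have "(\<lambda>n. integral\<^sup>L M (f n)) \<longlonglongrightarrow> measure M C" by simp
  then have "eventually (\<lambda>n. dist (integral\<^sup>L M (f n)) (measure M C) < e / 2) sequentially"
    by (rule tendstoD) (use e in simp)
  then obtain N where "\<forall>n\<ge>N. dist (integral\<^sup>L M (f n)) (measure M C) < e / 2"
    by (auto simp: eventually_sequentially)
  then have "dist (integral\<^sup>L M (f N)) (measure M C) < e / 2" by simp
  then have n: "integral\<^sup>L M (f N) < measure M C + e / 2"
    unfolding dist_real_def by linarith
  define n where "n = N"
  have "eventually (\<lambda>k. dist (integral\<^sup>L (Ms k) (f n)) (integral\<^sup>L M (f n)) < e / 2) sequentially"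
    unfolding n_def by (rule tendstoD[OF conv[OF fc[of N] fb[of N]]]) (use e in simp)
  then show ?thesis
  proof eventually_elim
    case (elim k)
    interpret Mk: prob_space "Ms k" by (rule Pk)
    have spk: "space (Ms k) = UNIV" using sets_eq_imp_space_eq[OF Sk[of k]] by simp
    have "measure (Ms k) A = integral\<^sup>L (Ms k) (indicator A)" using spk by simp
    also have "\<dots> \<le> integral\<^sup>L (Ms k) (f n)"
    proof (rule integral_mono)
      show "integrable (Ms k) (indicator A :: 'a \<Rightarrow> real)"
        using A Sk[of k] by (intro Mk.integrable_const_bound[where B=1] borel_measurable_indicator) auto
      show "integrable (Ms k) (f n)"
        using f01 by (intro Mk.integrable_const_bound[where B=1] fmeas[OF Sk]) auto
      fix x show "indicator A x \<le> f n x" using fC[of x] AC f01 by (auto simp: indicator_def)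
    qed
    finally show ?case using elim n unfolding n_def dist_real_def by linarith
  qed
qed

lemma marg_conv:
  fixes Es :: "nat \<Rightarrow> (real \<times> real \<times> real) measure"
  assumes Sk: "\<And>k. sets (Es k) = sets borel" and S: "sets E = sets borel"
    and w: "weak_conv_seq Es E"
    and fc: "continuous_on UNIV (f :: real \<times> real \<Rightarrow> real)" and fb: "bounded (range f)"
  shows "(\<lambda>k. integral\<^sup>L (inflow_marg (Es k)) f) \<longlonglongrightarrow> integral\<^sup>L (inflow_marg E) f"
proof -
  have peq: "(\<lambda>(\<tau>::real, \<xi>::real, a::real). (\<tau>, \<xi>)) = (\<lambda>x. (fst x, fst (snd x)))"
    by (auto simp: fun_eq_iff)
  have pc: "continuous_on UNIV (\<lambda>(\<tau>::real, \<xi>::real, a::real). (\<tau>, \<xi>))"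
    unfolding peq by (intro continuous_intros)
  have pm: "(\<lambda>(\<tau>::real, \<xi>::real, a::real). (\<tau>, \<xi>)) \<in> measurable N borel" if "sets N = sets borel" for N
    using borel_measurable_continuous_onI[OF pc] measurable_cong_sets[OF that refl] by blast
  have fm: "f \<in> borel_measurable borel" using fc by (rule borel_measurable_continuous_onI)
  have int: "integral\<^sup>L (inflow_marg N) f = integral\<^sup>L N (\<lambda>x. f ((\<lambda>(\<tau>, \<xi>, a). (\<tau>, \<xi>)) x))"
    if "sets N = sets borel" for N
    unfolding inflow_marg_def by (rule integral_distr[OF pm[OF that] fm])
  have gc: "continuous_on UNIV (\<lambda>x. f ((\<lambda>(\<tau>::real, \<xi>::real, a::real). (\<tau>, \<xi>)) x))"
    by (rule continuous_on_compose2[OF fc pc]) auto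
  have gb: "bounded (range (\<lambda>x. f ((\<lambda>(\<tau>::real, \<xi>::real, a::real). (\<tau>, \<xi>)) x)))"
    by (rule bounded_subset[OF fb]) auto
  show ?thesis
    using w gc gb unfolding weak_conv_seq_def int[OF Sk] int[OF S] by blast
qed

context zsetup begin

lemma sol_zero:
  assumes F: "goodF F" and z: "sol F z" shows "z 0 = 0"
proof -
  have "Phi F z 0 = z 0" using sol_imp_fix(2)[OF F z] T_nonneg by simp
  moreover have "Phi F z 0 = 0" using T_nonneg by (simp add: Phi_def)
  ultimately show ?thesis by simp
qed

lemma sol_cont_left:
  assumes F: "goodF F" and z: "sol F z" shows "continuous_on {..T} z"
proof -
  have c1: "continuous_on {..0} z"
  proof (rule continuous_on_eq[OF continuous_on_const[of _ 0]])
    fix x :: real assume x: "x \<in> {..0}"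
    show "0 = z x"
    proof (cases "x = 0")
      case True then show ?thesis using sol_zero[OF F z] by simp
    next
      case False then have "x \<notin> {0..T}" using x by auto
      then show ?thesis using z by (simp add: sol_def)
    qed
  qed
  have c2: "continuous_on {0..T} z" using z by (simp add: sol_def)
  have "continuous_on ({..0} \<union> {0..T}) z"
    by (rule continuous_on_closed_Un[OF _ _ c1 c2]) auto
  moreover have "{..0} \<union> {0..T} = {..T}" using T_nonneg by auto
  ultimately show ?thesis by simp
qed

lemma mu_conv:
  fixes Fs :: "nat \<Rightarrow> (real \<times> real) measure"
  assumes Fk: "\<And>k. goodF (Fs k)" and F: "goodF F"
    and conv: "\<And>f::real\<times>real \<Rightarrow> real. continuous_on UNIV f \<Longrightarrow> bounded (range f) \<Longrightarrow>
                 (\<lambda>k. integral\<^sup>L (Fs k) f) \<longlonglongrightarrow> integral\<^sup>L F f"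
    and z: "sol F z" and s: "s \<in> {0..T}"
  shows "(\<lambda>k. mu (Fs k) z s) \<longlonglongrightarrow> mu F z s"
proof -
  have cz: "Cset z" using sol_imp_fix(1)[OF F z] .
  define c where "c \<tau> = z s - z \<tau>" for \<tau>
  have cm[measurable]: "c \<in> borel_measurable borel" unfolding c_def using c_meas[OF cz] .
  define A where "A = {x::real\<times>real. fst x \<le> s \<and> c (fst x) < snd x}"
  define Cl where "Cl = {x::real\<times>real. fst x \<le> s \<and> c (fst x) \<le> snd x}"
  define Op where "Op = {x::real\<times>real. fst x < s \<and> c (fst x) < snd x}"
  have zc: "continuous_on {..T} z" by (rule sol_cont_left[OF F z])
  define h where "h x = snd x - c (fst x)" for x :: "real \<times> real"
  have hc: "continuous_on ({..s} \<times> UNIV) h"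
  proof -
    have "continuous_on ({..s} \<times> UNIV) (\<lambda>x::real\<times>real. z (fst x))"
      by (rule continuous_on_compose2[OF zc continuous_on_fst[OF continuous_on_id]]) (use s in auto)
    then show ?thesis unfolding h_def c_def by (intro continuous_intros)
  qed
  have hc': "continuous_on ({..<s} \<times> UNIV) h"
    by (rule continuous_on_subset[OF hc]) auto
  have Cl_eq: "Cl = ({..s} \<times> UNIV) \<inter> h -` {0..}" by (auto simp: Cl_def h_def)
  have Op_eq: "Op = ({..<s} \<times> UNIV) \<inter> h -` {0<..}" by (auto simp: Op_def h_def)
  have Clc: "closed Cl" unfolding Cl_eq
    by (rule continuous_closed_preimage[OF hc]) (auto intro: closed_Times)
  have Oo: "open Op" unfolding Op_eq
    by (rule continuous_open_preimage[OF hc']) (auto intro: open_Times)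
  have Ab: "A \<in> sets borel"
  proof -
    have "A = {x \<in> space borel. fst x \<le> s \<and> c (fst x) < snd x}" by (simp add: A_def)
    also have "\<dots> \<in> sets borel" by measurable
    finally show ?thesis .
  qed
  have Clb: "Cl \<in> sets borel" using Clc by (rule borel_closed)
  have Ob: "Op \<in> sets borel" using Oo by (rule borel_open)
  have ACl: "A \<subseteq> Cl" by (auto simp: A_def Cl_def)
  have OA: "Op \<subseteq> A" by (auto simp: A_def Op_def)
  have muA: "mu F' z s = measure F' A" if F': "goodF F'" for F'
  proof -
    have "Sg s (\<lambda>\<tau>. z s - z \<tau>) = A \<inter> (Td \<times> {xa..xb})"
      using Td_sub by (auto simp: Sg_def A_def c_def)
    then show ?thesis using F_restrict[OF F' Ab] by (simp add: mu_eq)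
  qed
  interpret PF: prob_space F using F by (simp add: goodF_def)
  have SF: "sets F = sets borel" using F by (simp add: goodF_def)
  have spF: "space F = UNIV" using sets_eq_imp_space_eq[OF SF] by simp
  have ClA: "measure F Cl \<le> measure F A"
  proof -
    have "measure F (Cl - A) \<le> G * (0 * (s - 0))"
    proof (rule F_small[OF F, where l=c and a=0 and b=s and d=0])
      show "Cl - A \<in> sets borel" using Clb Ab by auto
      show "0 \<le> s" using s by simp
      fix \<tau> \<xi> assume "(\<tau>, \<xi>) \<in> Cl - A" "\<tau> \<in> Td" "\<xi> \<in> {xa..xb}"
      then show "\<tau> \<in> {0..s} \<and> c \<tau> \<le> \<xi> \<and> \<xi> \<le> c \<tau> + 0"
        using Td_sub by (auto simp: Cl_def A_def)
    qed simp
    then have z0: "measure F (Cl - A) \<le> 0" by simp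
    have "measure F Cl \<le> measure F (A \<union> (Cl - A))"
      using Clb Ab SF by (intro PF.finite_measure_mono) auto
    also have "\<dots> \<le> measure F A + measure F (Cl - A)"
      using Clb Ab SF by (intro measure_Un_le) auto
    finally show ?thesis using z0 by linarith
  qed
  have AO: "measure F A \<le> measure F Op"
  proof -
    have "measure F (A - Op) \<le> G * ((xb - xa) * (s - s))"
    proof (rule F_small[OF F, where l="\<lambda>_. xa" and a=s and b=s and d="xb - xa"])
      show "A - Op \<in> sets borel" using Ob Ab by auto
      show "0 \<le> xb - xa" using x_lt by simp
      fix \<tau> \<xi> assume "(\<tau>, \<xi>) \<in> A - Op" "\<tau> \<in> Td" "\<xi> \<in> {xa..xb}"
      then show "\<tau> \<in> {s..s} \<and> xa \<le> \<xi> \<and> \<xi> \<le> xa + (xb - xa)"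
        by (auto simp: A_def Op_def)
    qed simp
    then have z0: "measure F (A - Op) \<le> 0" by simp
    have "measure F A \<le> measure F (Op \<union> (A - Op))"
      using Ob Ab SF by (intro PF.finite_measure_mono) auto
    also have "\<dots> \<le> measure F Op + measure F (A - Op)"
      using Ob Ab SF by (intro measure_Un_le) auto
    finally show ?thesis using z0 by linarith
  qed
  have Pk: "prob_space (Fs k)" for k using Fk by (simp add: goodF_def)
  have Sk: "sets (Fs k) = sets borel" for k using Fk by (simp add: goodF_def)
  have PF': "prob_space F" and SF': "sets F = sets borel" using F by (auto simp: goodF_def)
  have "(\<lambda>k. measure (Fs k) A) \<longlonglongrightarrow> measure F A"
    unfolding tendsto_iff
  proof (intro allI impI)
    fix e :: real assume e: "0 < e"
    have up: "eventually (\<lambda>k. measure (Fs k) A < measure F Cl + e) sequentially"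
      by (rule port_upper[OF Pk Sk PF' SF' conv Clc Ab ACl e])
    have lo: "eventually (\<lambda>k. measure (Fs k) (- A) < measure F (- Op) + e) sequentially"
      by (rule port_upper[OF Pk Sk PF' SF' conv]) (use Oo Ab OA e in auto)
    have cO: "measure F (- Op) = 1 - measure F Op"
      using PF.prob_compl[of Op] Ob SF spF by (simp add: Compl_eq_Diff_UNIV)
    show "eventually (\<lambda>k. dist (measure (Fs k) A) (measure F A) < e) sequentially"
      using up lo
    proof eventually_elim
      case (elim k)
      interpret Pk: prob_space "Fs k" by (rule Pk)
      have spk: "space (Fs k) = UNIV" using sets_eq_imp_space_eq[OF Sk[of k]] by simp
      have "measure (Fs k) (- A) = 1 - measure (Fs k) A"
        using Pk.prob_compl[of A] Ab Sk[of k] spk by (simp add: Compl_eq_Diff_UNIV)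
      then show ?case using elim ClA AO cO by (simp add: dist_real_def abs_less_iff)
    qed
  qed
  then show ?thesis using muA[OF F] muA[OF Fk] by simp
qed

end

context zsetup begin

lemma main_conv:
  fixes Fs :: "nat \<Rightarrow> (real \<times> real) measure"
  assumes Fk: "\<And>k. goodF (Fs k)" and F: "goodF F"
    and conv: "\<And>f::real\<times>real \<Rightarrow> real. continuous_on UNIV f \<Longrightarrow> bounded (range f) \<Longrightarrow>
                 (\<lambda>k. integral\<^sup>L (Fs k) f) \<longlonglongrightarrow> integral\<^sup>L F f"
  shows "uniform_limit {0..T} (\<lambda>k. z_sol T Td {xa..xb} V (Fs k)) (z_sol T Td {xa..xb} V F) sequentially"
proof -
  define zk where "zk k = z_sol T Td {xa..xb} V (Fs k)" for k
  define z where "z = z_sol T Td {xa..xb} V F"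
  have sk: "sol (Fs k) (zk k)" for k unfolding zk_def by (rule z_sol_spec[OF Fk])
  have s: "sol F z" unfolding z_def by (rule z_sol_spec[OF F])
  have ck: "Cset (zk k)" for k using sol_imp_fix(1)[OF Fk sk] .
  have cz: "Cset z" using sol_imp_fix(1)[OF F s] .
  define ek where "ek k s = L * \<bar>mu (Fs k) z s - mu F z s\<bar>" for k s
  define a where "a k = integral {0..T} (ek k)" for k
  have eint: "ek k integrable_on {0..t}" if "t \<le> T" for k t
    unfolding ek_def by (rule mu_diff_int[OF Fk F cz cz that])
  have enn: "0 \<le> ek k s" for k s using L_nonneg by (simp add: ek_def)
  have ann: "0 \<le> a k" for k unfolding a_def by (rule integral_nonneg[OF eint]) (auto simp: enn)
  have alim: "a \<longlonglongrightarrow> 0"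
  proof -
    have "(\<lambda>k. integral {0..T} (ek k)) \<longlonglongrightarrow> integral {0..T} (\<lambda>_. 0::real)"
    proof (rule dominated_convergence(2)[where h="\<lambda>_. L"])
      show "ek k integrable_on {0..T}" for k by (rule eint) simp
      show "(\<lambda>_. L) integrable_on {0..T}" by (rule integrable_continuous_interval) (rule continuous_on_const)
      fix k x assume x: "x \<in> {0..T}"
      have "\<bar>mu (Fs k) z x - mu F z x\<bar> \<le> 1"
        using mu_range[OF Fk, of k z x] mu_range[OF F, of z x] by linarith
      then show "norm (ek k x) \<le> L" using L_nonneg
        by (simp add: ek_def abs_mult mult_left_le)
    next
      fix x assume x: "x \<in> {0..T}"
      have "(\<lambda>k. L * \<bar>mu (Fs k) z x - mu F z x\<bar>) \<longlonglongrightarrow> L * \<bar>mu F z x - mu F z x\<bar>"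
        by (intro tendsto_intros mu_conv[OF Fk F conv s x])
      then show "(\<lambda>k. ek k x) \<longlonglongrightarrow> 0" by (simp add: ek_def)
    qed
    then show ?thesis by (simp add: a_def[abs_def])
  qed
  have bound: "\<bar>zk k t - z t\<bar> \<le> 2 * a k * exp (lam * t)" if t: "t \<in> {0..T}" for k t
  proof (rule iterate_bound[where w="\<lambda>t. zk k t - z t" and B="2 * (T * V 0)", OF ann _ _ _ t])
    show "0 \<le> 2 * (T * V 0)" using T_nonneg V0_nonneg by simp
    fix \<tau> assume tau: "\<tau> \<in> {0..T}"
    show "\<bar>zk k \<tau> - z \<tau>\<bar> \<le> 2 * (T * V 0)"
      using sol_bound[OF Fk sk[of k] tau] sol_bound[OF F s tau] by linarith
  next
    fix K :: real assume K: "0 \<le> K" and le: "\<forall>\<tau>\<in>{0..T}. \<bar>zk k \<tau> - z \<tau>\<bar> \<le> K * exp (lam * \<tau>)"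
    show "\<forall>\<tau>\<in>{0..T}. \<bar>zk k \<tau> - z \<tau>\<bar> \<le> (K / 2 + a k) * exp (lam * \<tau>)"
    proof
      fix \<tau> assume tau: "\<tau> \<in> {0..T}"
      have tT: "\<tau> \<le> T" using tau by simp
      have "\<bar>zk k \<tau> - z \<tau>\<bar> = \<bar>Phi (Fs k) (zk k) \<tau> - Phi F z \<tau>\<bar>"
        using sol_imp_fix(2)[OF Fk sk tau] sol_imp_fix(2)[OF F s tau] by simp
      also have "\<dots> \<le> integral {0..\<tau>} (\<lambda>s. L * \<bar>mu (Fs k) (zk k) s - mu F z s\<bar>)"
        by (rule Phi_diff[OF Fk F ck cz tau])
      also have "\<dots> \<le> integral {0..\<tau>} (\<lambda>s. L * \<bar>mu (Fs k) (zk k) s - mu (Fs k) z s\<bar> + ek k s)"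
      proof (rule integral_le)
        show "(\<lambda>s. L * \<bar>mu (Fs k) (zk k) s - mu F z s\<bar>) integrable_on {0..\<tau>}"
          by (rule mu_diff_int[OF Fk F ck cz tT])
        show "(\<lambda>s. L * \<bar>mu (Fs k) (zk k) s - mu (Fs k) z s\<bar> + ek k s) integrable_on {0..\<tau>}"
          by (intro integrable_add mu_diff_int[OF Fk Fk ck cz tT] eint tT)
        fix x
        have "\<bar>mu (Fs k) (zk k) x - mu F z x\<bar> \<le> \<bar>mu (Fs k) (zk k) x - mu (Fs k) z x\<bar> + \<bar>mu (Fs k) z x - mu F z x\<bar>"
          by linarith
        then show "L * \<bar>mu (Fs k) (zk k) x - mu F z x\<bar> \<le> L * \<bar>mu (Fs k) (zk k) x - mu (Fs k) z x\<bar> + ek k x"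
          using L_nonneg unfolding ek_def by (metis distrib_left mult_left_mono)
      qed
      also have "\<dots> = integral {0..\<tau>} (\<lambda>s. L * \<bar>mu (Fs k) (zk k) s - mu (Fs k) z s\<bar>) + integral {0..\<tau>} (ek k)"
        by (intro integral_add mu_diff_int[OF Fk Fk ck cz tT] eint tT)
      also have "\<dots> \<le> K / 2 * exp (lam * \<tau>) + a k"
      proof (rule add_mono)
        show "integral {0..\<tau>} (\<lambda>s. L * \<bar>mu (Fs k) (zk k) s - mu (Fs k) z s\<bar>) \<le> K / 2 * exp (lam * \<tau>)"
          by (rule core[OF Fk ck cz K _ tau]) (use le in auto)
        show "integral {0..\<tau>} (ek k) \<le> a k"
          unfolding a_def by (rule integral_subset_le) (use tau eint enn in auto)
      qed
      also have "\<dots> \<le> (K / 2 + a k) * exp (lam * \<tau>)"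
      proof -
        have "1 \<le> exp (lam * \<tau>)" using lam_pos tau by auto
        then have "a k * 1 \<le> a k * exp (lam * \<tau>)" using ann[of k] by (intro mult_left_mono) auto
        then show ?thesis by (simp add: distrib_right)
      qed
      finally show "\<bar>zk k \<tau> - z \<tau>\<bar> \<le> (K / 2 + a k) * exp (lam * \<tau>)" .
    qed
  qed
  have "uniform_limit {0..T} zk z sequentially"
  proof (rule uniform_limitI)
    fix e :: real assume e: "0 < e"
    have "(\<lambda>k. 2 * a k * exp (lam * T)) \<longlonglongrightarrow> 2 * 0 * exp (lam * T)"
      by (intro tendsto_intros alim)
    then have "eventually (\<lambda>k. dist (2 * a k * exp (lam * T)) (2 * 0 * exp (lam * T)) < e) sequentially"
      using e by (rule tendstoD)
    then show "eventually (\<lambda>k. \<forall>t\<in>{0..T}. dist (zk k t) (z t) < e) sequentially"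
    proof eventually_elim
      case (elim k)
      show ?case
      proof
        fix t assume t: "t \<in> {0..T}"
        have "exp (lam * t) \<le> exp (lam * T)" using t lam_pos by simp
        then have "2 * a k * exp (lam * t) \<le> 2 * a k * exp (lam * T)"
          using ann[of k] by (intro mult_left_mono) auto
        moreover have "2 * a k * exp (lam * T) < e" using elim ann[of k] by (simp add: dist_real_def)
        ultimately show "dist (zk k t) (z t) < e" using bound[OF t, of k] by (simp add: dist_real_def)
      qed
    qed
  qed
  then show ?thesis by (simp add: zk_def[abs_def] z_def)
qed

end

theorem corollary2:
  fixes Tmax Xmin Xmax G :: real
    and Td Ta :: "real set"
    and m :: "(real \<times> real) measure"
    and V :: "real \<Rightarrow> real"
    and Es :: "nat \<Rightarrow> (real \<times> real \<times> real) measure"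
    and E :: "(real \<times> real \<times> real) measure"
  assumes "compact Td" "Td \<subseteq> {0..Tmax}"
    and "compact Ta" "Ta \<subseteq> {0..Tmax}"
    and "0 \<le> Xmin" "Xmin < Xmax"
    and "prob_space m" "sets m = sets borel" "emeasure m ({Xmin..Xmax} \<times> Ta) = 1"
    and "0 < G"
    and "\<forall>x \<ge> 0. V x \<ge> 0"
    and "\<forall>x y. 0 \<le> x \<longrightarrow> x < y \<longrightarrow> V y < V x"
    and "\<exists>L. L-lipschitz_on {0..} V"
    and "\<forall>k. Es k \<in> M_mG Td {Xmin..Xmax} Ta m G"
    and "E \<in> M_mG Td {Xmin..Xmax} Ta m G"
    and "weak_conv_seq Es E"
  shows "uniform_limit {0..Tmax}
           (\<lambda>k. z_sol Tmax Td {Xmin..Xmax} V (inflow_marg (Es k)))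
           (z_sol Tmax Td {Xmin..Xmax} V (inflow_marg E)) sequentially"
proof -
  obtain L where L: "L-lipschitz_on {0..} V" using assms(13) by blast
  have Td_ne: "Td \<noteq> {}"
  proof
    assume "Td = {}"
    then have "emeasure E (Td \<times> {Xmin..Xmax} \<times> Ta) = 0" by simp
    then show False using assms(15) by (simp add: M_mG_def)
  qed
  have T0: "0 \<le> Tmax" using Td_ne assms(2) by auto
  interpret zsetup Tmax G Xmin Xmax L Td V
    by unfold_locales (use assms L T0 compact_imp_closed in auto)
  have gk: "goodF (inflow_marg (Es k))" for k
    using assms(14) by (auto simp: M_mG_def P_mG_def goodF_def)
  have g: "goodF (inflow_marg E)"
    using assms(15) by (auto simp: M_mG_def P_mG_def goodF_def)
  have Sk: "sets (Es k) = sets borel" for k using assms(14) by (auto simp: M_mG_def)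
  have S: "sets E = sets borel" using assms(15) by (auto simp: M_mG_def)
  show ?thesis
    by (rule main_conv[OF gk g marg_conv[OF Sk S assms(16)]])
qed

end
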